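(* With $p=(z-w)^2$ and notation as in the context, for integers $k\ge 2$ and $n\ge 0$: \[ \langle w^k\phi_n,z^k\psi_n\rangle=\begin{cases}0, & n\le k-3,\\[2pt] \dfrac{A^n_{0,n}A^n_{n,0}}{D_nD_{n+1}}, & n=k-2,\\[6pt] \dfrac{-A^{n+1}_{0,n+1}A^n_{n,n+1-k}+A^n_{0,n}A^n_{n,n+2-k}}{D_nD_{n+1}}, & n\ge k-1.\end{cases} \] Consequently, for every $k\ge3$, \[ \Sigma_k=\sum_{n=k-2}^\infty\left(\frac{2(n+3-k)(n^2+5n+4+3k-3k^2)}{(n+1)(n+2)(n+3)(n+4)}\right)^2 . \]
   Context: $H^2(\mathbb D^2)$ is the Hardy space on the bidisk (monomials $z^aw^b$ orthonormal). Let $p=(z-w)^2$ and $M=[p]$ the smallest closed subspace containing $p$ invariant under multiplication by $z$ and $w$. For $n\ge0$ let $A^n=(a_{i,j})_{i,j=0}^n$ with $a_{i,j}=\langle pw^{|i-j|},pz^{|i-j|}\rangle$ (the symmetric pentadiagonal Toeplitz matrix with diagonal $6$, first off-diagonals $-4$, second off-diagonals $1$); $D_0=1$, $D_n=\det A^{n-1}$ ($n\ge1$); $A^n_{i,j}$ is the $(i,j)$ cofactor of $A^n$ ($(-1)^{i+j}$ times the minor deleting row $i$ and column $j$; $A^0_{0,0}=1$). Define $\phi_0=\psi_0=p/\|p\|$ and for $n\ge1$ $\phi_n=\frac{\sum_{j=0}^n pA^n_{0,j}z^jw^{n-j}}{\sqrt{D_{n+1}D_n}}$, $\psi_n=\frac{\sum_{j=0}^n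 pA^n_{n,j}z^jw^{n-j}}{\sqrt{D_{n+1}D_n}}$ (orthonormal bases of $M\ominus zM$ and $M\ominus wM$). For $k\ge0$, $\Sigma_k:=\sum_{n\ge0}|\langle w^k\phi_n,z^k\psi_n\rangle|^2$. *)

theory Defs
  imports Complex_Main "HOL-Computational_Algebra.Polynomial" "Jordan_Normal_Form.Determinant"
begin

text \<open>Polynomials in two variables z, w with real coefficients are modelled as
  real poly poly: the outer variable is z, the inner one is w, so the coefficient
  of z^a w^b in P is coeff (coeff P a) b.\<close>

type_synonym bipoly = "real poly poly"

definition zz :: bipoly where "zz = monom 1 1"
definition ww :: bipoly where "ww = [:monom 1 1:]"

text \<open>H^2(D^2) inner product restricted to polynomials: monomials z^a w^b orthonormal.\<close>
definition hip :: "bipoly \<Rightarrow> bipoly \<Rightarrow> real" where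
  "hip P Q = (\<Sum>a\<le>degree P. \<Sum>b\<le>degree (coeff P a). coeff (coeff P a) b * coeff (coeff Q a) b)"

definition hnorm :: "bipoly \<Rightarrow> real" where "hnorm P = sqrt (hip P P)"

definition pp :: bipoly where "pp = (zz - ww)^2"

definition Amat :: "nat \<Rightarrow> real mat" where
  "Amat n = mat (n+1) (n+1) (\<lambda>(i,j). let d = nat \<bar>int i - int j\<bar> in hip (pp * ww^d) (pp * zz^d))"

definition Dn :: "nat \<Rightarrow> real" where
  "Dn n = (if n = 0 then 1 else det (Amat (n - 1)))"

definition Acof :: "nat \<Rightarrow> nat \<Rightarrow> nat \<Rightarrow> real" where
  "Acof n i j = cofactor (Amat n) i j"

definition phi :: "nat \<Rightarrow> bipoly" where
  "phi n = (if n = 0 then smult [:1 / hnorm pp:] pp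
     else smult [:1 / sqrt (Dn (n+1) * Dn n):]
            (\<Sum>j\<le>n. smult [:Acof n 0 j:] (pp * zz^j * ww^(n-j))))"

definition psi :: "nat \<Rightarrow> bipoly" where
  "psi n = (if n = 0 then smult [:1 / hnorm pp:] pp
     else smult [:1 / sqrt (Dn (n+1) * Dn n):]
            (\<Sum>j\<le>n. smult [:Acof n n j:] (pp * zz^j * ww^(n-j))))"

definition Sigma_k :: "nat \<Rightarrow> real" where
  "Sigma_k k = (\<Sum>n. \<bar>hip (ww^k * phi n) (zz^k * psi n)\<bar>^2)"

end

theory Submission
  imports Defs
begin

definition cf :: "bipoly \<Rightarrow> nat \<Rightarrow> nat \<Rightarrow> real" where "cf P a b = coeff (coeff P a) b"
definition mon :: "nat \<Rightarrow> nat \<Rightarrow> bipoly" where "mon a b = zz^a * ww^b"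
definition bB :: "bipoly \<Rightarrow> nat" where "bB P = (\<Sum>a\<le>degree P. degree (coeff P a))"

lemma ww_pow: "ww^b = [:monom 1 b:]"
  unfolding ww_def by (induction b) (auto simp: mult_monom)
lemma zz_pow: "zz^a = monom 1 a"
  unfolding zz_def by (simp add: monom_power)
lemma mon_eq: "mon a b = monom (monom 1 b) a"
  unfolding mon_def zz_pow ww_pow by (simp add: smult_monom)

lemma cf_mon: "cf (mon a b) a' b' = (if a = a' \<and> b = b' then 1 else 0)"
  unfolding cf_def mon_eq by (auto simp: coeff_monom)

lemma deg_le_bB: "degree (coeff P a) \<le> bB P"
proof (cases "a \<le> degree P")
  case True
  then show ?thesis unfolding bB_def by (intro member_le_sum) auto
next
  case False
  then show ?thesis by (simp add: coeff_eq_0)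
qed

lemma hip_alt:
  assumes "degree P \<le> A" "\<And>a. degree (coeff P a) \<le> B"
  shows "hip P Q = (\<Sum>a\<le>A. \<Sum>b\<le>B. cf P a b * cf Q a b)"
proof -
  have inner: "(\<Sum>b\<le>degree (coeff P a). cf P a b * cf Q a b) = (\<Sum>b\<le>B. cf P a b * cf Q a b)" for a
    by (rule sum.mono_neutral_left) (use assms(2)[of a] in \<open>auto simp: cf_def coeff_eq_0\<close>)
  have "hip P Q = (\<Sum>a\<le>degree P. \<Sum>b\<le>B. cf P a b * cf Q a b)"
    unfolding hip_def using inner by (simp add: cf_def)
  also have "\<dots> = (\<Sum>a\<le>A. \<Sum>b\<le>B. cf P a b * cf Q a b)"
    by (rule sum.mono_neutral_left) (use assms(1) in \<open>auto simp: cf_def coeff_eq_0\<close>)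
  finally show ?thesis .
qed

lemma hip_add_left: "hip (P + P') Q = hip P Q + hip P' Q"
proof -
  let ?A = "degree P + degree P'" and ?B = "bB P + bB P'"
  have d1: "degree P \<le> ?A" "degree P' \<le> ?A" "degree (P+P') \<le> ?A"
    using degree_add_le[of P ?A P'] by auto
  have d2: "degree (coeff P a) \<le> ?B" "degree (coeff P' a) \<le> ?B" "degree (coeff (P+P') a) \<le> ?B" for a
    using deg_le_bB[of P a] deg_le_bB[of P' a] degree_add_le[of "coeff P a" ?B "coeff P' a"] by auto
  show ?thesis
    unfolding hip_alt[OF d1(1) d2(1)] hip_alt[OF d1(2) d2(2)] hip_alt[OF d1(3) d2(3)]
    by (simp add: cf_def algebra_simps sum.distrib)
qed

lemma hip_smult_left: "hip (smult [:c:] P) Q = c * hip P Q"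
proof -
  have d1: "degree (smult [:c:] P) \<le> degree P" by simp
  have d2: "degree (coeff (smult [:c:] P) a) \<le> bB P" for a
    using deg_le_bB[of P a] by (simp add: le_trans[OF degree_smult_le])
  have e1: "hip (smult [:c:] P) Q = (\<Sum>a\<le>degree P. \<Sum>b\<le>bB P. cf (smult [:c:] P) a b * cf Q a b)"
    by (rule hip_alt[OF d1 d2])
  have e2: "hip P Q = (\<Sum>a\<le>degree P. \<Sum>b\<le>bB P. cf P a b * cf Q a b)"
    by (rule hip_alt[OF order_refl deg_le_bB])
  show ?thesis
    unfolding e1 e2 by (simp add: cf_def sum_distrib_left mult.assoc)
qed

lemma hip_diff_left: "hip (P - P') Q = hip P Q - hip P' Q"
proof -
  let ?A = "degree P + degree P'" and ?B = "bB P + bB P'"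
  have d1: "degree P \<le> ?A" "degree P' \<le> ?A" "degree (P-P') \<le> ?A"
    using degree_diff_le[of P ?A P'] by auto
  have d2: "degree (coeff P a) \<le> ?B" "degree (coeff P' a) \<le> ?B" "degree (coeff (P-P') a) \<le> ?B" for a
    using deg_le_bB[of P a] deg_le_bB[of P' a] degree_diff_le[of "coeff P a" ?B "coeff P' a"] by auto
  show ?thesis
    unfolding hip_alt[OF d1(1) d2(1)] hip_alt[OF d1(2) d2(2)] hip_alt[OF d1(3) d2(3)]
    by (simp add: cf_def algebra_simps sum_subtractf)
qed

lemma hip_sum_left: "hip (\<Sum>j\<in>S. f j) Q = (\<Sum>j\<in>S. hip (f j) Q)"
proof (induction S rule: infinite_finite_induct)
  case (infinite A)
  then show ?case by (simp add: hip_def)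
next
  case empty
  then show ?case by (simp add: hip_def)
next
  case (insert x F)
  then show ?case by (simp add: hip_add_left)
qed

lemma ifmul: "(if P then 1 else 0) * (x::real) = (if P then x else 0)" by simp

lemma hip_mon: "hip (mon a b) Q = cf Q a b"
proof -
  have d1: "degree (mon a b) \<le> a" unfolding mon_eq by (simp add: degree_monom_le)
  have d2: "degree (coeff (mon a b) a') \<le> b" for a' unfolding mon_eq
    by (simp add: coeff_monom degree_monom_le)
  have "hip (mon a b) Q = (\<Sum>a'\<le>a. \<Sum>b'\<le>b. cf (mon a b) a' b' * cf Q a' b')"
    by (rule hip_alt[OF d1 d2])
  also have "\<dots> = (\<Sum>a'\<le>a. if a' = a then cf Q a b else 0)"
    by (rule sum.cong[OF refl]) (auto simp: cf_mon ifmul sum.delta)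
  also have "\<dots> = cf Q a b" by (simp add: sum.delta')
  finally show ?thesis .
qed

lemma cf_add: "cf (P + Q) a b = cf P a b + cf Q a b" by (simp add: cf_def)
lemma cf_diff: "cf (P - Q) a b = cf P a b - cf Q a b" by (simp add: cf_def)
lemma cf_smult: "cf (smult [:c:] P) a b = c * cf P a b" by (simp add: cf_def)
lemma cf_sum: "cf (\<Sum>j\<in>S. f j) a b = (\<Sum>j\<in>S. cf (f j) a b)"
  unfolding cf_def by (induction S rule: infinite_finite_induct) auto

lemma hip_add_right: "hip P (Q + Q') = hip P Q + hip P Q'"
  by (simp add: hip_def algebra_simps sum.distrib)
lemma hip_smult_right: "hip P (smult [:c:] Q) = c * hip P Q"
  by (simp add: hip_def sum_distrib_left algebra_simps)
lemma hip_sum_right: "hip P (\<Sum>j\<in>S. f j) = (\<Sum>j\<in>S. hip P (f j))"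
proof (induction S rule: infinite_finite_induct)
  case (infinite A)
  then show ?case by (simp add: hip_def)
next
  case empty
  then show ?case by (simp add: hip_def)
next
  case (insert x F)
  then show ?case by (simp add: hip_add_right)
qed

lemma pp_expand: "pp * zz^s * ww^t = mon (s+2) t - (mon (s+1) (t+1) + mon (s+1) (t+1)) + mon s (t+2)"
  unfolding pp_def mon_def by (simp add: power2_eq_square power_add algebra_simps)

definition aa :: "nat \<Rightarrow> nat \<Rightarrow> real" where
  "aa u v = (if u = v then 6 else if u = v+1 \<or> v = u+1 then -4 else if u = v+2 \<or> v = u+2 then 1 else 0)"

lemma hip_pp: assumes "s + t = s' + t'"
  shows "hip (pp * zz^s * ww^t) (pp * zz^s' * ww^t') = aa s s'"
  unfolding pp_expand hip_add_left hip_diff_left hip_mon cf_add cf_diff cf_mon aa_def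
  using assms by auto




lemma aa_sym: "aa u v = aa v u" unfolding aa_def by auto
lemma aa_Suc: "aa (Suc u) (Suc v) = aa u v" unfolding aa_def by auto

lemma Amat_carrier: "Amat n \<in> carrier_mat (n+1) (n+1)" unfolding Amat_def by simp

lemma Amat_entry: assumes "i \<le> n" "j \<le> n" shows "Amat n $$ (i,j) = aa i j"
proof -
  define d where "d = nat \<bar>int i - int j\<bar>"
  have "hip (pp * ww^d) (pp * zz^d) = hip (pp * zz^0 * ww^d) (pp * zz^d * ww^0)" by simp
  also have "\<dots> = aa 0 d" by (rule hip_pp) simp
  also have "aa 0 d = aa i j" unfolding d_def aa_def by auto
  finally show ?thesis using assms unfolding Amat_def by (simp add: d_def Let_def)
qed

definition fz :: "nat \<Rightarrow> (nat \<Rightarrow> real) \<Rightarrow> nat \<Rightarrow> real" where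
  "fz N f i = (if i \<le> N then f i else 0)"

lemma band_cut: assumes "m + 2 \<le> M"
  shows "(\<Sum>i\<le>M. g i * aa i m) = (\<Sum>i\<le>m+2. g i * aa i m)"
  using assms
proof (induction M rule: dec_induct)
  case base then show ?case by simp
next
  case (step M)
  then have "aa (Suc M) m = 0" unfolding aa_def by auto
  with step show ?case by simp
qed

lemma band_eval: "(\<Sum>i\<le>m+2. g i * aa i m) = 6*g m - 4*g(m+1) + g(m+2)
   + (if 1 \<le> m then -4*g(m-1) else 0) + (if 2 \<le> m then g(m-2) else 0)"
proof (cases m)
  case 0
  then show ?thesis by (simp add: aa_def numeral_eq_Suc)
next
  case (Suc m1)
  show ?thesis
  proof (cases m1)
    case 0
    with Suc show ?thesis by (simp add: aa_def numeral_eq_Suc)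
  next
    case (Suc m')
    have z: "(\<Sum>i<m'. g i * aa i m) = 0"
      by (rule sum.neutral) (use \<open>m = Suc m1\<close> Suc in \<open>auto simp: aa_def\<close>)
    have "(\<Sum>i\<le>m+2. g i * aa i m) = (\<Sum>i<Suc (Suc (Suc (Suc (Suc m')))). g i * aa i m)"
      using \<open>m = Suc m1\<close> Suc by (simp add: lessThan_Suc_atMost[symmetric])
    also have "\<dots> = (\<Sum>i<m'. g i * aa i m) + g m' * aa m' m + g (m'+1) * aa (m'+1) m
       + g (m'+2) * aa (m'+2) m + g (m'+3) * aa (m'+3) m + g (m'+4) * aa (m'+4) m"
      by (simp add: numeral_eq_Suc)
    finally show ?thesis using z \<open>m = Suc m1\<close> Suc by (simp add: aa_def numeral_eq_Suc)
  qed
qed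

lemma band: "(\<Sum>i\<le>N. f i * aa i m) = 6*fz N f m - 4*fz N f (m+1) + fz N f (m+2)
   + (if 1 \<le> m then -4*fz N f (m-1) else 0) + (if 2 \<le> m then fz N f (m-2) else 0)"
proof -
  have "(\<Sum>i\<le>N. f i * aa i m) = (\<Sum>i\<le>N+m+2. fz N f i * aa i m)"
    by (rule sum.mono_neutral_cong_left) (auto simp: fz_def)
  also have "\<dots> = (\<Sum>i\<le>m+2. fz N f i * aa i m)" by (rule band_cut) simp
  also have "\<dots> = 6*fz N f m - 4*fz N f (m+1) + fz N f (m+2)
   + (if 1 \<le> m then -4*fz N f (m-1) else 0) + (if 2 \<le> m then fz N f (m-2) else 0)"
    by (rule band_eval)
  finally show ?thesis .
qed

lemma cof_sol:
  fixes A :: "real mat"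
  assumes A: "A \<in> carrier_mat N N" and y: "y \<in> carrier_vec N"
    and Ay: "A *\<^sub>v y = unit_vec N r" and r: "r < N" and j: "j < N"
  shows "cofactor A r j = det A * y $ j"
proof -
  have "(adj_mat A * A) *\<^sub>v y = adj_mat A *\<^sub>v (A *\<^sub>v y)"
    using adj_mat(1)[OF A] A y by (metis assoc_mult_mat_vec)
  also have "\<dots> = adj_mat A *\<^sub>v unit_vec N r" using Ay by simp
  finally have e: "(det A \<cdot>\<^sub>m 1\<^sub>m N) *\<^sub>v y = adj_mat A *\<^sub>v unit_vec N r"
    using adj_mat(3)[OF A] by simp
  have "((det A \<cdot>\<^sub>m 1\<^sub>m N) *\<^sub>v y) $ j = det A * y $ j" using y j by simp
  moreover have "(adj_mat A *\<^sub>v unit_vec N r) $ j = cofactor A r j"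
    using adj_mat(1)[OF A] j r A by (simp add: adj_mat_def scalar_prod_right_unit)
  ultimately show ?thesis using e by simp
qed




definition xq :: "nat \<Rightarrow> nat \<Rightarrow> real" where
  "xq n i = (real i + 1)*(real n + 1 - real i)*(real n + 2 - real i)"
definition den :: "nat \<Rightarrow> real" where "den n = (real n+3)*(real n+4)"
definition xc :: "nat \<Rightarrow> nat \<Rightarrow> real" where
  "xc n i = xq n i / den n"
definition dc :: "nat \<Rightarrow> real" where
  "dc n = (real n+1)*(real n+2)^2*(real n+3)/12"

lemma den_pos: "den n > 0" unfolding den_def by (simp add: add_pos_nonneg)
lemma den_nz: "den n \<noteq> 0" using den_pos[of n] by simp

lemma xc_fz: "i \<le> n+2 \<Longrightarrow> fz n (xc n) i = xc n i"
  unfolding fz_def xc_def xq_def by (auto simp: le_Suc_eq)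

lemma sol0: assumes "m \<le> n" shows "(\<Sum>i\<le>n. xc n i * aa i m) = (if m = 0 then 1 else 0)"
proof -
  have "(\<Sum>i\<le>n. xc n i * aa i m) = 6*xc n m - 4*xc n (m+1) + xc n (m+2)
   + (if 1 \<le> m then -4*xc n (m-1) else 0) + (if 2 \<le> m then xc n (m-2) else 0)"
    unfolding band using assms by (simp add: xc_fz)
  also have "\<dots> = (if m = 0 then 1 else 0)"
  proof (cases "m \<le> 1")
    case True
    from True consider "m = 0" | "m = 1" by linarith
    then show ?thesis
    proof cases
      case 1 then show ?thesis using den_nz[of n]
        by (simp add: xc_def field_simps) (simp add: xq_def den_def algebra_simps)
    next
      case 2 then show ?thesis using den_nz[of n]
        by (simp add: xc_def field_simps) (simp add: xq_def den_def algebra_simps)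
    qed
  next
    case False
    then obtain m' where m': "m = m' + 2" by (metis add.commute le_Suc_ex not_le Suc_1 Suc_leI)
    show ?thesis unfolding m' using den_nz[of n]
      by (simp add: xc_def field_simps) (simp add: xq_def algebra_simps)
  qed
  finally show ?thesis .
qed

definition ab :: "nat \<Rightarrow> real" where
  "ab d = (if d = 0 then 6 else if d = 1 then -4 else if d = 2 then 1 else 0)"

lemma aa_ab: "aa u v = ab (nat \<bar>int u - int v\<bar>)"
  unfolding aa_def ab_def by (simp add: nat_abs_int_diff) arith

lemma soln: assumes "m \<le> n" shows "(\<Sum>i\<le>n. xc n (n-i) * aa i m) = (if m = n then 1 else 0)"
proof -
  have "(\<Sum>i\<le>n. xc n (n-i) * aa i m) = (\<Sum>i\<le>n. xc n i * aa (n-i) m)"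
    by (rule sum.reindex_bij_witness[where i="\<lambda>i. n-i" and j="\<lambda>i. n-i"]) auto
  also have "\<dots> = (\<Sum>i\<le>n. xc n i * aa i (n-m))"
  proof (rule sum.cong[OF refl])
    fix i assume "i \<in> {..n}"
    then have "nat \<bar>int (n-i) - int m\<bar> = nat \<bar>int i - int (n-m)\<bar>" using assms by auto
    then show "xc n i * aa (n-i) m = xc n i * aa i (n-m)" by (simp only: aa_ab)
  qed
  also have "\<dots> = (if n - m = 0 then 1 else 0)" by (rule sol0) simp
  finally show ?thesis using assms by simp
qed

lemma Amat_dims[simp]: "dim_row (Amat n) = Suc n" "dim_col (Amat n) = Suc n"
  unfolding Amat_def by auto

lemma Amat_vec:
  assumes "\<And>m. m \<le> n \<Longrightarrow> (\<Sum>i\<le>n. f i * aa i m) = (if m = r then 1 else 0)" "r \<le> n"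
  shows "Amat n *\<^sub>v vec (n+1) f = unit_vec (n+1) r"
proof (rule eq_vecI)
  fix m assume m: "m < dim_vec (unit_vec (n+1) r)"
  then have m': "m \<le> n" by simp
  have "(Amat n *\<^sub>v vec (n+1) f) $ m = (\<Sum>k<n+1. Amat n $$ (m,k) * f k)"
    using m Amat_carrier[of n] by (simp add: scalar_prod_def atLeast0LessThan)
  also have "\<dots> = (\<Sum>k\<le>n. f k * aa k m)"
    using m' by (simp add: lessThan_Suc_atMost Amat_entry aa_sym mult.commute)
  also have "\<dots> = unit_vec (n+1) r $ m" using assms(1)[OF m'] m' by (simp add: unit_vec_def)
  finally show "(Amat n *\<^sub>v vec (n+1) f) $ m = unit_vec (n+1) r $ m" .
qed (use Amat_carrier[of n] in simp)

lemma Acof0: assumes "j \<le> n" shows "Acof n 0 j = det (Amat n) * xc n j"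
proof -
  have "Acof n 0 j = det (Amat n) * vec (n+1) (xc n) $ j"
    unfolding Acof_def
    by (rule cof_sol[OF Amat_carrier _ Amat_vec]) (use assms sol0 in auto)
  then show ?thesis using assms by simp
qed

lemma Acofn: assumes "j \<le> n" shows "Acof n n j = det (Amat n) * xc n (n-j)"
proof -
  have "Acof n n j = det (Amat n) * vec (n+1) (\<lambda>i. xc n (n-i)) $ j"
    unfolding Acof_def
    by (rule cof_sol[OF Amat_carrier _ Amat_vec]) (use assms soln in auto)
  then show ?thesis using assms by simp
qed

lemma Acof00: "Acof n 0 0 = Dn n"
proof (cases n)
  case 0
  have "mat_delete (Amat 0) 0 0 \<in> carrier_mat 0 0"
    using mat_delete_carrier[OF Amat_carrier[of 0]] by simp
  then show ?thesis using 0 by (simp add: Acof_def cofactor_def Dn_def)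
next
  case (Suc n')
  have "mat_delete (Amat n) 0 0 = Amat n'"
  proof (rule eq_matI)
    fix i j assume "i < dim_row (Amat n')" "j < dim_col (Amat n')"
    then have ij: "i \<le> n'" "j \<le> n'" using Amat_carrier[of n'] by auto
    then show "mat_delete (Amat n) 0 0 $$ (i, j) = Amat n' $$ (i, j)"
      using Suc Amat_carrier[of n] by (simp add: mat_delete_def Amat_entry aa_Suc)
  qed (use Suc in auto)
  then show ?thesis using Suc by (simp add: Acof_def cofactor_def Dn_def)
qed

lemma Dn_closed: "Dn n = dc n"
proof (induction n)
  case 0
  then show ?case by (simp add: Dn_def dc_def)
next
  case (Suc n)
  have "Dn n = Dn (Suc n) * xc n 0"
    using Acof0[of 0 n] Acof00[of n] by (simp add: Dn_def)
  then have "dc n = Dn (Suc n) * xq n 0 / den n" using Suc by (simp add: xc_def)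
  have xp: "xq n 0 > 0" unfolding xq_def by (simp add: add_pos_nonneg)
  have key: "dc (Suc n) * xq n 0 = dc n * den n"
    by (simp add: dc_def den_def xq_def field_simps) (simp add: algebra_simps power2_eq_square)
  have "Dn (Suc n) * xq n 0 = dc n * den n"
    using \<open>dc n = Dn (Suc n) * xq n 0 / den n\<close> den_nz[of n] by (simp add: field_simps)
  then have "Dn (Suc n) * xq n 0 = dc (Suc n) * xq n 0" using key by simp
  then show "Dn (Suc n) = dc (Suc n)" using xp by simp

qed

lemma detA: "det (Amat n) = dc (n+1)" using Dn_closed[of "n+1"] by (simp add: Dn_def)




definition Phi :: "nat \<Rightarrow> nat \<Rightarrow> bipoly" where
  "Phi r n = smult [:1 / sqrt (Dn (n+1) * Dn n):] (\<Sum>j\<le>n. smult [:Acof n r j:] (pp * zz^j * ww^(n-j)))"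

lemma dc_pos: "dc n > 0" unfolding dc_def by (simp add: add_pos_nonneg)

lemma hnorm_pp: "hnorm pp = sqrt 6"
proof -
  have "hip pp pp = hip (pp * zz^0 * ww^0) (pp * zz^0 * ww^0)" by simp
  also have "\<dots> = 6" by (subst hip_pp) (auto simp: aa_def)
  finally show ?thesis by (simp add: hnorm_def)
qed

lemma Dn01: "Dn 0 = 1" "Dn 1 = 6" "Dn (Suc 0) = 6" using Dn_closed[of 0] Dn_closed[of 1] by (auto simp: dc_def)

lemma phi_eq: "phi n = Phi 0 n"
proof (cases n)
  case 0
  have "Acof 0 0 0 = 1" using Acof00[of 0] Dn01 by simp
  then show ?thesis using 0 by (simp add: phi_def Phi_def hnorm_pp Dn01)
next
  case (Suc m) then show ?thesis by (simp add: phi_def Phi_def)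
qed

lemma psi_eq: "psi n = Phi n n"
proof (cases n)
  case 0
  have "Acof 0 0 0 = 1" using Acof00[of 0] Dn01 by simp
  then show ?thesis using 0 by (simp add: psi_def Phi_def hnorm_pp Dn01)
next
  case (Suc m) then show ?thesis by (simp add: psi_def Phi_def)
qed

lemma hip_smult_both: "hip (smult [:r:] X) (smult [:r:] Y) = r * r * hip X Y"
  by (simp add: hip_smult_left hip_smult_right)

lemma hip_raw: "hip (ww^k * phi n) (zz^k * psi n) =
   (\<Sum>j\<le>n. Acof n n j * (\<Sum>i\<le>n. Acof n 0 i * aa i (j+k))) / (Dn n * Dn (n+1))"
proof -
  define r where "r = 1 / sqrt (Dn (n+1) * Dn n)"
  have L: "ww^k * phi n = smult [:r:] (\<Sum>i\<le>n. smult [:Acof n 0 i:] (pp*zz^i*ww^(n-i+k)))"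
  proof -
    have "ww^k * phi n = smult [:r:] (\<Sum>i\<le>n. ww^k * smult [:Acof n 0 i:] (pp*zz^i*ww^(n-i)))"
      unfolding phi_eq Phi_def r_def by (simp add: sum_distrib_left)
    also have "\<dots> = smult [:r:] (\<Sum>i\<le>n. smult [:Acof n 0 i:] (pp*zz^i*ww^(n-i+k)))"
      by (rule arg_cong[where f="smult _"], rule sum.cong[OF refl])
         (simp only: mult_smult_right power_add mult_ac)
    finally show ?thesis .
  qed
  have R: "zz^k * psi n = smult [:r:] (\<Sum>j\<le>n. smult [:Acof n n j:] (pp*zz^(j+k)*ww^(n-j)))"
  proof -
    have "zz^k * psi n = smult [:r:] (\<Sum>j\<le>n. zz^k * smult [:Acof n n j:] (pp*zz^j*ww^(n-j)))"
      unfolding psi_eq Phi_def r_def by (simp add: sum_distrib_left)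
    also have "\<dots> = smult [:r:] (\<Sum>j\<le>n. smult [:Acof n n j:] (pp*zz^(j+k)*ww^(n-j)))"
      by (rule arg_cong[where f="smult _"], rule sum.cong[OF refl])
         (simp only: mult_smult_right power_add mult_ac)
    finally show ?thesis .
  qed
  have H: "hip (\<Sum>i\<le>n. smult [:Acof n 0 i:] (pp*zz^i*ww^(n-i+k)))
               (\<Sum>j\<le>n. smult [:Acof n n j:] (pp*zz^(j+k)*ww^(n-j)))
        = (\<Sum>j\<le>n. Acof n n j * (\<Sum>i\<le>n. Acof n 0 i * aa i (j+k)))"
    unfolding hip_sum_left hip_smult_left hip_sum_right hip_smult_right
    by (rule sum.cong[OF refl], rule arg_cong[where f="\<lambda>x. _ * x"], rule sum.cong[OF refl])
       (subst hip_pp, auto)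
  have pos: "Dn (n+1) * Dn n > 0" using dc_pos by (simp add: Dn_closed)
  have rr: "r * r = 1 / (Dn n * Dn (n+1))"
    unfolding r_def using pos by (simp add: mult.commute)
  show ?thesis unfolding L R hip_smult_both H rr by simp
qed

lemma inner: assumes "2 \<le> m"
  shows "(\<Sum>i\<le>n. xc n i * aa i m) = (if m = n+1 then xc n (n-1) - 4*xc n n else if m = n+2 then xc n n else 0)"
proof (cases "m \<le> n")
  case True
  then show ?thesis using sol0[OF True] assms by auto
next
  case False
  then show ?thesis unfolding band using assms by (auto simp: fz_def)
qed




lemma inner_cof: assumes "2 \<le> m"
  shows "(\<Sum>i\<le>n. Acof n 0 i * aa i m) = dc (n+1) *
     (if m = n+1 then xc n (n-1) - 4*xc n n else if m = n+2 then xc n n else 0)"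
proof -
  have "(\<Sum>i\<le>n. Acof n 0 i * aa i m) = (\<Sum>i\<le>n. dc (n+1) * (xc n i * aa i m))"
    by (rule sum.cong[OF refl]) (simp add: Acof0 detA)
  also have "\<dots> = dc (n+1) * (\<Sum>i\<le>n. xc n i * aa i m)" by (simp add: sum_distrib_left)
  finally show ?thesis using inner[OF assms] by simp
qed

lemma outer: assumes k: "2 \<le> k"
  shows "(\<Sum>j\<le>n. Acof n n j * (\<Sum>i\<le>n. Acof n 0 i * aa i (j+k))) =
    (if n + 3 \<le> k then 0
     else if n + 2 = k then Acof n n 0 * (dc (n+1) * xc n n)
     else Acof n n (n+1-k) * (dc (n+1) * (xc n (n-1) - 4*xc n n)) + Acof n n (n+2-k) * (dc (n+1) * xc n n))"
proof -
  define al where "al = dc (n+1) * (xc n (n-1) - 4*xc n n)"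
  define be where "be = dc (n+1) * xc n n"
  have e: "(\<Sum>j\<le>n. Acof n n j * (\<Sum>i\<le>n. Acof n 0 i * aa i (j+k))) =
     (\<Sum>j\<le>n. Acof n n j * (if j+k = n+1 then al else if j+k = n+2 then be else 0))"
    by (rule sum.cong[OF refl]) (use k in \<open>simp add: inner_cof al_def be_def\<close>)
  show ?thesis
  proof (cases "n + 3 \<le> k")
    case True
    then show ?thesis unfolding e by (intro trans[OF sum.neutral]) auto
  next
    case False
    show ?thesis
    proof (cases "n + 2 = k")
      case True
      have "(\<Sum>j\<le>n. Acof n n j * (if j+k = n+1 then al else if j+k = n+2 then be else 0))
          = (\<Sum>j\<le>n. if j = 0 then Acof n n j * be else 0)"
        by (rule sum.cong[OF refl]) (use True in auto)
      then show ?thesis unfolding e using True False by (simp add: be_def)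
    next
      case F2: False
      have "(\<Sum>j\<le>n. Acof n n j * (if j+k = n+1 then al else if j+k = n+2 then be else 0))
          = (\<Sum>j\<le>n. (if j = n+1-k then Acof n n j * al else 0) + (if j = n+2-k then Acof n n j * be else 0))"
        by (rule sum.cong[OF refl]) (use False F2 k in auto)
      also have "\<dots> = Acof n n (n+1-k) * al + Acof n n (n+2-k) * be"
      proof -
        have "n+1-k \<le> n" "n+2-k \<le> n" using k by auto
        then show ?thesis by (simp add: sum.distrib)
      qed
      finally show ?thesis unfolding e using False F2 by (simp add: al_def be_def)
    qed
  qed
qed

lemma acof_next: assumes "1 \<le> n"
  shows "Acof (n+1) 0 (n+1) = - (dc (n+1) * (xc n (n-1) - 4*xc n n))"
proof -
  obtain n' where n': "n = Suc n'" using assms by (cases n) auto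
  have "Acof (n+1) 0 (n+1) = dc (n+2) * xc (n+1) (n+1)" by (simp add: Acof0 detA)
  also have "\<dots> = - (dc (n+1) * (xc n (n-1) - 4*xc n n))"
    using den_nz[of n] den_nz[of "n+1"] unfolding n'
    by (simp add: xc_def dc_def field_simps) (simp add: xq_def den_def algebra_simps power2_eq_square)
  finally show ?thesis .
qed

theorem part1: assumes "2 \<le> k"
  shows "hip (ww^k * phi n) (zz^k * psi n) =
              (if n + 3 \<le> k then 0
               else if n + 2 = k then Acof n 0 n * Acof n n 0 / (Dn n * Dn (n+1))
               else (- Acof (n+1) 0 (n+1) * Acof n n (n+1-k) + Acof n 0 n * Acof n n (n+2-k))
                      / (Dn n * Dn (n+1)))"
proof -
  have c: "Acof n 0 n = dc (n+1) * xc n n" by (simp add: Acof0 detA)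
  show ?thesis
  proof (cases "n + 2 \<le> k")
    case True
    then show ?thesis unfolding hip_raw outer[OF assms] c by (auto simp: mult.commute)
  next
    case False
    then have "1 \<le> n" using assms by linarith
    with False show ?thesis unfolding hip_raw outer[OF assms] c acof_next[OF \<open>1 \<le> n\<close>]
      by (simp add: algebra_simps)
  qed
qed




definition tden :: "nat \<Rightarrow> real" where "tden n = (real n+1)*(real n+2)*(real n+3)*(real n+4)"
definition tnum :: "nat \<Rightarrow> nat \<Rightarrow> real" where
  "tnum k n = 2*(real n+3-real k)*((real n)^2+5*real n+4+3*real k-3*(real k)^2)"

lemma tden_pos: "tden n > 0" unfolding tden_def by (simp add: add_pos_nonneg)

lemma dc_den: "dc (Suc n) = (real n+2)*(real n+3)/12 * den n"
  unfolding dc_def den_def by (simp add: algebra_simps power2_eq_square)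

lemma Acof0_cl: assumes "j \<le> n"
  shows "Acof n 0 j = (real n+2)*(real n+3)*(real j+1)*(real n+1-real j)*(real n+2-real j)/12"
proof -
  have "Acof n 0 j = dc (Suc n) * (xq n j / den n)" using assms by (simp add: Acof0 detA xc_def)
  also have "\<dots> = (real n+2)*(real n+3)/12 * xq n j" using den_nz[of n] by (simp add: dc_den)
  also have "\<dots> = (real n+2)*(real n+3)*(real j+1)*(real n+1-real j)*(real n+2-real j)/12"
    by (simp add: xq_def)
  finally show ?thesis .
qed

lemma AcofN_cl: assumes "j \<le> n"
  shows "Acof n n j = (real n+2)*(real n+3)*(real n - real j+1)*(real j+1)*(real j+2)/12"
proof -
  have xqe: "xq n (n-j) = (real n - real j+1)*(real j+1)*(real j+2)"
    using assms by (simp add: xq_def of_nat_diff algebra_simps)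
  have "Acof n n j = dc (Suc n) * (xq n (n-j) / den n)" using assms by (simp add: Acofn detA xc_def)
  also have "\<dots> = (real n+2)*(real n+3)/12 * xq n (n-j)" using den_nz[of n] by (simp add: dc_den)
  also have "\<dots> = (real n+2)*(real n+3)*(real n - real j+1)*(real j+1)*(real j+2)/12"
    unfolding xqe by simp
  finally show ?thesis .
qed

lemma v_zero: assumes "3 \<le> k" "n + 3 \<le> k" shows "hip (ww^k * phi n) (zz^k * psi n) = 0"
  using assms by (simp add: part1)

lemma v_closed: assumes k: "3 \<le> k" and kn: "k \<le> n + 2"
  shows "hip (ww^k * phi n) (zz^k * psi n) = - tnum k n / tden n"
proof (cases "n + 2 = k")
  case True
  have "hip (ww^k * phi n) (zz^k * psi n) = (dc (n+1) * xc n n) * (dc (n+1) * xc n n) / (dc n * dc (n+1))"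
    using True k by (simp add: part1 Acof0 Acofn detA Dn_closed)
  also have "\<dots> = - tnum k n / tden n"
    using den_nz[of n] dc_pos[of n] dc_pos[of "n+1"] tden_pos[of n] True[symmetric]
    apply (simp add: xc_def field_simps)
    apply (simp add: xq_def dc_def den_def tnum_def tden_def power2_eq_square field_simps)
    apply ((simp add: algebra_simps)?)
    done
  finally show ?thesis .
next
  case False
  define N where "N = real n"
  define K where "K = real k"
  define a where "a = N+1"
  define b where "b = N+2"
  define c where "c = N+3"
  define d where "d = N+4"
  have pos: "a > 0" "b > 0" "c > 0" "d > 0" unfolding a_def b_def c_def d_def N_def by linarith+
  have k2: "2 \<le> k" using k by simp
  have kn': "k \<le> n + 1" using kn False by linarith
  have e1: "Acof (n+1) 0 (n+1) = b*c*d/6"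
    by (simp add: Acof0_cl b_def c_def d_def N_def algebra_simps)
  have e2: "Acof n 0 n = a*b*c/6"
    by (simp add: Acof0_cl a_def b_def c_def N_def algebra_simps)
  have e3: "Acof n n (n+1-k) = b*c*K*(b-K)*(c-K)/12"
    using kn' k by (simp add: AcofN_cl b_def c_def N_def K_def of_nat_diff algebra_simps)
  have e4: "Acof n n (n+2-k) = b*c*(K-1)*(c-K)*(d-K)/12"
    using kn' k by (simp add: AcofN_cl b_def c_def d_def N_def K_def of_nat_diff algebra_simps)
  have e5: "Dn n * Dn (n+1) = (a*b^2*c/12)*(b*c^2*d/12)"
    by (simp add: Dn_closed dc_def a_def b_def c_def d_def N_def algebra_simps)
  have e6: "tden n = a*b*c*d" unfolding tden_def a_def b_def c_def d_def N_def by simp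
  have e7: "tnum k n = 2*(N+3-K)*(N^2+5*N+4+3*K-3*K^2)" unfolding tnum_def N_def K_def by simp
  have "hip (ww^k * phi n) (zz^k * psi n) =
     (-(b*c*d/6) * (b*c*K*(b-K)*(c-K)/12) + a*b*c/6 * (b*c*(K-1)*(c-K)*(d-K)/12)) / ((a*b^2*c/12)*(b*c^2*d/12))"
    unfolding part1[OF k2] e1 e2 e3 e4 e5[symmetric] using False kn' by simp
  also have "\<dots> = - (2*(N+3-K)*(N^2+5*N+4+3*K-3*K^2)) / (a*b*c*d)"
    using pos apply (simp add: field_simps)
    apply (simp add: a_def b_def c_def d_def algebra_simps power2_eq_square)
    done
  also have "\<dots> = - tnum k n / tden n" unfolding e6 e7 by simp
  finally show ?thesis .
qed




lemma tbound:
  fixes x K :: real assumes K: "2 \<le> K" "K \<le> x+2"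
  shows "\<bar>2*(x+3-K)*(x^2+5*x+4+3*K-3*K^2)\<bar> \<le> 4*(x+1)*(x+3)*(x+4)"
proof -
  define P where "P = K*(K-1)"
  have P0: "0 \<le> P" using K unfolding P_def by simp
  have P1: "P \<le> (x+2)*(x+1)" unfolding P_def by (rule mult_mono) (use K in auto)
  have P1': "P \<le> x*x+3*x+2" using P1 by (simp add: algebra_simps)
  have Q: "x^2+5*x+4+3*K-3*K^2 = x*x+5*x+4-3*P" unfolding P_def by (simp add: power2_eq_square algebra_simps)
  have xx: "0 \<le> x*x" by simp
  have x0: "0 \<le> x" using K by linarith
  have lin: "y+5*x+4-3*P \<le> 2*(y+7*x+12) \<and> -(y+5*x+4-3*P) \<le> 2*(y+7*x+12)"
    if "0 \<le> P" "P \<le> y+3*x+2" "0 \<le> y" "0 \<le> x" for y :: real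
    using that by auto
  have Qb1: "x*x+5*x+4-3*P \<le> 2*(x*x+7*x+12)" using lin[OF P0 P1' xx x0] by blast
  have Qb2: "-(x*x+5*x+4-3*P) \<le> 2*(x*x+7*x+12)" using lin[OF P0 P1' xx x0] by blast
  have Qb: "\<bar>x*x+5*x+4-3*P\<bar> \<le> 2*(x*x+7*x+12)" using Qb1 Qb2 by (simp add: abs_le_iff)
  have A: "0 \<le> x+3-K" "x+3-K \<le> x+1" using K by linarith+
  have "\<bar>2*(x+3-K)*(x*x+5*x+4-3*P)\<bar> = 2*(x+3-K)*\<bar>x*x+5*x+4-3*P\<bar>" using A by (simp add: abs_mult)
  also have "\<dots> \<le> 2*(x+1)*(2*(x*x+7*x+12))"
    by (intro mult_mono mult_left_mono) (use A Qb x0 in auto)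
  also have "\<dots> = 4*(x+1)*(x+3)*(x+4)" by (simp add: algebra_simps)
  finally have "\<bar>2*(x+3-K)*(x*x+5*x+4-3*P)\<bar> \<le> 4*(x+1)*(x+3)*(x+4)" .
  then show ?thesis unfolding Q .
qed

lemma gbound: assumes k: "3 \<le> k"
  shows "(tnum k (m+(k-2)) / tden (m+(k-2)))^2 \<le> 16 / ((real m+1)*(real m+2))"
proof -
  define n where "n = m+(k-2)"
  define x where "x = real n"
  have xm: "real m + 1 \<le> x" using k unfolding x_def n_def by simp
  have tb: "\<bar>tnum k n\<bar> \<le> 4*(x+1)*(x+3)*(x+4)"
    unfolding tnum_def x_def by (rule tbound) (use k in \<open>auto simp: n_def\<close>)
  have tp: "tden n = (x+1)*(x+2)*(x+3)*(x+4)" unfolding tden_def x_def by simp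
  have x0: "0 \<le> x" unfolding x_def by simp
  have "\<bar>tnum k n / tden n\<bar> = \<bar>tnum k n\<bar> / tden n" using tden_pos[of n] by simp
  also have "\<dots> \<le> 4*(x+1)*(x+3)*(x+4) / tden n"
    by (rule divide_right_mono[OF tb]) (use tden_pos[of n] in simp)
  also have "\<dots> = (4 * ((x+1)*(x+3)*(x+4))) / ((x+2) * ((x+1)*(x+3)*(x+4)))"
    unfolding tp by (simp only: mult_ac)
  also have "\<dots> = 4 / (x+2)"
  proof (rule mult_divide_mult_cancel_right)
    have "x+1 \<noteq> 0" "x+3 \<noteq> 0" "x+4 \<noteq> 0" using x0 by linarith+
    then show "(x+1)*(x+3)*(x+4) \<noteq> 0" by simp
  qed
  finally have ab: "\<bar>tnum k n / tden n\<bar> \<le> 4 / (x+2)" .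
  have "(tnum k n / tden n)^2 = \<bar>tnum k n / tden n\<bar>^2" by (rule power2_abs[symmetric])
  also have "\<dots> \<le> (4 / (x+2))^2" by (rule power_mono[OF ab]) simp
  also have "\<dots> = 16 / ((x+2)*(x+2))" by (simp add: power2_eq_square)
  also have "\<dots> \<le> 16 / ((real m+1)*(real m+2))"
    by (rule divide_left_mono) (use xm x0 in \<open>auto intro!: mult_mono mult_pos_pos\<close>)
  finally show ?thesis unfolding n_def .
qed

lemma summable_tel: "summable (\<lambda>m::nat. 16 / ((real m+1)*(real m+2)))"
proof -
  define f where "f = (\<lambda>n::nat. - 16 / (real n + 1))"
  have "f \<longlonglongrightarrow> 0"
  proof -
    have "(\<lambda>n. inverse (real (Suc n))) \<longlonglongrightarrow> 0" by (rule LIMSEQ_inverse_real_of_nat)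
    then have "(\<lambda>n. - 16 * inverse (real (Suc n))) \<longlonglongrightarrow> - 16 * 0" by (intro tendsto_mult tendsto_const)
    then show ?thesis unfolding f_def by (simp add: divide_inverse add.commute)
  qed
  then have "(\<lambda>n. f (Suc n) - f n) sums (0 - f 0)" by (rule telescope_sums)
  moreover have "(\<lambda>n. f (Suc n) - f n) = (\<lambda>m::nat. 16 / ((real m+1)*(real m+2)))"
    unfolding f_def by (rule ext) (simp add: field_simps)
  ultimately show ?thesis by (auto simp: sums_iff)
qed

theorem part2: assumes k: "3 \<le> k"
  shows "summable (\<lambda>n. \<bar>hip (ww^k * phi n) (zz^k * psi n)\<bar>^2) \<and>
            summable (\<lambda>m. (let n = real (m + (k - 2)); kk = real k in
               (2 * (n + 3 - kk) * (n^2 + 5*n + 4 + 3*kk - 3*kk^2))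
                 / ((n+1)*(n+2)*(n+3)*(n+4)))^2) \<and>
            Sigma_k k = (\<Sum>m. (let n = real (m + (k - 2)); kk = real k in
               (2 * (n + 3 - kk) * (n^2 + 5*n + 4 + 3*kk - 3*kk^2))
                 / ((n+1)*(n+2)*(n+3)*(n+4)))^2)"
proof -
  define V where "V n = \<bar>hip (ww^k * phi n) (zz^k * psi n)\<bar>^2" for n
  define G where "G m = (let n = real (m + (k - 2)); kk = real k in
               (2 * (n + 3 - kk) * (n^2 + 5*n + 4 + 3*kk - 3*kk^2))
                 / ((n+1)*(n+2)*(n+3)*(n+4)))^2" for m
  have G_eq: "G m = (tnum k (m+(k-2)) / tden (m+(k-2)))^2" for m
    unfolding G_def tnum_def tden_def Let_def by simp
  have VG: "V (m + (k-2)) = G m" for m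
  proof -
    have "k \<le> m + (k-2) + 2" by simp
    then show ?thesis unfolding V_def G_eq using v_closed[OF k] by (simp add: power2_eq_square)
  qed
  have V0: "V i = 0" if "i < k-2" for i
    unfolding V_def using v_zero[OF k, of i] that by simp
  have sG: "summable G"
  proof (rule summable_comparison_test[OF _ summable_tel])
    show "\<exists>N. \<forall>n\<ge>N. norm (G n) \<le> 16 / ((real n+1)*(real n+2))"
      using gbound[OF k] by (auto simp: G_eq)
  qed
  have sV: "summable V"
    using sG summable_iff_shift[of V "k-2"] VG by simp
  have "Sigma_k k = suminf V" unfolding Sigma_k_def V_def by simp
  also have "\<dots> = (\<Sum>m. V (m + (k-2))) + (\<Sum>i<k-2. V i)" by (rule suminf_split_initial_segment[OF sV])
  also have "\<dots> = suminf G" using V0 VG by simp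
  finally show ?thesis using sV sG unfolding V_def G_def by simp
qed


theorem mainTheorem8:
  shows "(\<forall>k n. k \<ge> 2 \<longrightarrow>
            hip (ww^k * phi n) (zz^k * psi n) =
              (if n + 3 \<le> k then 0
               else if n + 2 = k then Acof n 0 n * Acof n n 0 / (Dn n * Dn (n+1))
               else (- Acof (n+1) 0 (n+1) * Acof n n (n+1-k) + Acof n 0 n * Acof n n (n+2-k))
                      / (Dn n * Dn (n+1))))
       \<and> (\<forall>k. k \<ge> 3 \<longrightarrow>
            summable (\<lambda>n. \<bar>hip (ww^k * phi n) (zz^k * psi n)\<bar>^2) \<and>
            summable (\<lambda>m. (let n = real (m + (k - 2)); kk = real k in
               (2 * (n + 3 - kk) * (n^2 + 5*n + 4 + 3*kk - 3*kk^2))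
                 / ((n+1)*(n+2)*(n+3)*(n+4)))^2) \<and>
            Sigma_k k = (\<Sum>m. (let n = real (m + (k - 2)); kk = real k in
               (2 * (n + 3 - kk) * (n^2 + 5*n + 4 + 3*kk - 3*kk^2))
                 / ((n+1)*(n+2)*(n+3)*(n+4)))^2))"
    apply (rule conjI)
   apply (intro allI impI)
   apply (rule part1, assumption)
  apply (intro allI impI)
  apply (rule part2, assumption)
  done

end
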